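(* Let $\kappa$ be an uncountable regular cardinal and $\mu>1$ a cardinal. Let $A$ be the set of all $x\in{}^\kappa\mu$ such that $x(\alpha)=0$ for only finitely many $\alpha<\kappa$. Then $A$ is a closed subset of ${}^\kappa\mu$ that is not a retract of ${}^\kappa\mu$ (i.e. there is no continuous $f:{}^\kappa\mu\to A$ with $f\restriction A=\mathrm{id}_A$).
   Context: ${}^\kappa\mu$ carries the topology whose basic open sets are $N_s=\{x\in{}^\kappa\mu : s\subseteq x\}$ for $s$ a function from some ordinal $\alpha<\kappa$ to $\mu$. *)

theory Defs
  imports "HOL-Analysis.Analysis"
begin

text \<open>The cardinal kappa is represented by a cardinal order r on the type 'k
(a well-order on UNIV that is an initial ordinal). Ordinals alpha < kappa
correspond to proper initial segments of r, i.e. the sets underS r a.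
The cardinal mu is represented by a type 'm with a distinguished element z
playing the role of 0.\<close>

definition basic_nbhds :: "'k rel \<Rightarrow> ('k \<Rightarrow> 'm) set set" where
  "basic_nbhds r = {{x. \<forall>b \<in> underS r a. x b = s b} | a s. True}"

definition kappa_mu_top :: "'k rel \<Rightarrow> ('k \<Rightarrow> 'm) topology" where
  "kappa_mu_top r = topology_generated_by (basic_nbhds r)"

definition fin_zero_set :: "'m \<Rightarrow> ('k \<Rightarrow> 'm) set" where
  "fin_zero_set z = {x. finite {a. x a = z}}"

end

theory Submission
  imports Defs
begin
unbundle cardinal_syntax

fun alph :: "('k \<Rightarrow> 'k set \<Rightarrow> 'k) \<Rightarrow> 'k \<Rightarrow> nat \<Rightarrow> 'k" where
  "alph g a0 0 = a0"
| "alph g a0 (Suc n) = g (alph g a0 n) (alph g a0 ` {..n})"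

locale kmu =
  fixes r :: "'k rel"
  assumes co: "card_order r" and unc: "\<not> countable (UNIV :: 'k set)"
begin

lemma fld: "Field r = UNIV" and wo: "Well_order r"
  using card_order_on_Card_order[OF co] by (auto simp: card_order_on_def)


lemma rfl: "(a,a) \<in> r"
  using wo fld unfolding well_order_on_def linear_order_on_def partial_order_on_def preorder_on_def refl_on_def
  by auto

lemma tot: "(a,b) \<in> r \<or> (b,a) \<in> r"
  using wo fld unfolding well_order_on_def linear_order_on_def total_on_def refl_on_def
  by (metis UNIV_I rfl)

lemma trn: "(a,b) \<in> r \<Longrightarrow> (b,c) \<in> r \<Longrightarrow> (a,c) \<in> r"
  using wo unfolding well_order_on_def linear_order_on_def partial_order_on_def preorder_on_def trans_def
  by blast

lemma ants: "(a,b) \<in> r \<Longrightarrow> (b,a) \<in> r \<Longrightarrow> a = b"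
  using wo unfolding well_order_on_def linear_order_on_def partial_order_on_def antisym_def
  by blast

lemma nomax: "\<exists>d. c \<in> underS r d"
proof -
  have "\<not> finite (Field r)" using unc fld by (metis countable_finite)
  then have "Field r \<noteq> under r c"
    using Card_order_infinite_not_under card_order_on_Card_order[OF co] by blast
  then obtain d where "(d,c) \<notin> r" using fld unfolding under_def by auto
  then show ?thesis using tot[of c d] rfl[of c] unfolding underS_def by auto
qed

lemma underS_mono: "(a,a') \<in> r \<Longrightarrow> underS r a \<subseteq> underS r a'"
  unfolding underS_def using trn ants by blast

lemma base:
  assumes "generate_topology_on (basic_nbhds r) U" "x \<in> U"
  shows "\<exists>a. {w. \<forall>b\<in>underS r a. w b = x b} \<subseteq> U"
  using assms
proof (induction arbitrary: x)
  case Empty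
  then show ?case by simp
next
  case (Int A B)
  then obtain a1 a2 where a1: "{w. \<forall>b\<in>underS r a1. w b = x b} \<subseteq> A"
     and a2: "{w. \<forall>b\<in>underS r a2. w b = x b} \<subseteq> B" by blast
  show ?case
  proof (cases "(a1,a2) \<in> r")
    case True
    then show ?thesis using a1 a2 underS_mono[OF True] by (intro exI[of _ a2]) blast
  next
    case False
    then have "(a2,a1) \<in> r" using tot by blast
    then show ?thesis using a1 a2 underS_mono[of a2 a1] by (intro exI[of _ a1]) blast
  qed
next
  case (UN K)
  then show ?case by blast
next
  case (Basis s)
  then obtain a t where s: "s = {w. \<forall>b\<in>underS r a. w b = t b}"
    unfolding basic_nbhds_def by blast
  then show ?case using Basis by (intro exI[of _ a]) auto
qed

lemma basic_open: "openin (kappa_mu_top r) {w. \<forall>b\<in>underS r a. w b = s b}"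
  unfolding kappa_mu_top_def openin_topology_generated_by_iff
  by (rule generate_topology_on.Basis) (auto simp: basic_nbhds_def)

lemma topsp: "topspace (kappa_mu_top r) = UNIV"
  unfolding kappa_mu_top_def topology_generated_by_topspace basic_nbhds_def
  by blast

lemma open_base:
  assumes "openin (kappa_mu_top r) U" "x \<in> U"
  shows "\<exists>a. {w. \<forall>b\<in>underS r a. w b = x b} \<subseteq> U"
  using base assms unfolding kappa_mu_top_def openin_topology_generated_by_iff by blast


lemma closed_A:
  assumes reg: "regularCard r"
  shows "closedin (kappa_mu_top r) (fin_zero_set z :: ('k \<Rightarrow> 'm) set)"
proof -
  have "openin (kappa_mu_top r) (- (fin_zero_set z :: ('k \<Rightarrow> 'm) set))"
  proof (subst openin_subopen, intro ballI)
    fix x :: "'k \<Rightarrow> 'm"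
    assume "x \<in> - fin_zero_set z"
    then have inf: "infinite {a. x a = z}" by (simp add: fin_zero_set_def)
    obtain g :: "nat \<Rightarrow> 'k" where g: "inj g" "range g \<subseteq> {a. x a = z}"
      using infinite_countable_subset[OF inf] by blast
    define B where "B = range g"
    have "\<not> cofinal B r"
    proof
      assume "cofinal B r"
      then have "|B| =o r" using reg unfolding regularCard_def fld by blast
      moreover have "r =o |UNIV::'k set|"
      proof -
        have "|Field r| =o r" using card_of_Field_ordIso[of r] card_order_on_Card_order[OF co] by blast
        then show ?thesis unfolding fld by (rule ordIso_symmetric)
      qed
      ultimately have "|B| =o |UNIV::'k set|" by (rule ordIso_transitive)
      then have "\<exists>h. bij_betw h B (UNIV::'k set)" by (simp only: card_of_ordIso)
      then obtain h where "bij_betw h B (UNIV::'k set)" by blast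
      then have "UNIV = h ` B" by (simp add: bij_betw_def)
      moreover have "countable B" unfolding B_def by simp
      ultimately have "countable (UNIV::'k set)" using countable_image[of B h] by simp
      then show False using unc by blast
    qed
    then obtain a where a: "\<forall>b\<in>B. \<not> (a \<noteq> b \<and> (a,b) \<in> r)" unfolding cofinal_def fld by auto
    obtain d where d: "a \<in> underS r d" using nomax by blast
    have Bd: "B \<subseteq> underS r d"
    proof
      fix b assume "b \<in> B"
      then have "(b,a) \<in> r" using a tot[of a b] rfl[of a] by auto
      moreover have "(a,d) \<in> r" "a \<noteq> d" using d unfolding underS_def by auto
      ultimately have "(b,d) \<in> r" "b \<noteq> d" using trn[of b a d] ants[of a d] by auto
      then show "b \<in> underS r d" unfolding underS_def by auto
    qed
    let ?T = "{w. \<forall>b\<in>underS r d. w b = x b}"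
    have "?T \<subseteq> - fin_zero_set z"
    proof
      fix w assume w: "w \<in> ?T"
      have "B \<subseteq> {a. w a = z}" using w Bd g unfolding B_def by auto
      moreover have "infinite B" unfolding B_def using g(1) by (simp add: finite_image_iff)
      ultimately have "infinite {a. w a = z}" using finite_subset by blast
      then show "w \<in> - fin_zero_set z" unfolding fin_zero_set_def by simp
    qed
    then show "\<exists>T. openin (kappa_mu_top r) T \<and> x \<in> T \<and> T \<subseteq> - fin_zero_set z"
      using basic_open by blast
  qed
  then show ?thesis by (simp add: closedin_def topsp Compl_eq_Diff_UNIV)
qed


lemma lt_trans: "a \<in> underS r b \<Longrightarrow> b \<in> underS r c \<Longrightarrow> a \<in> underS r c"
  unfolding underS_def using trn ants by blast

lemma no_ret:
  fixes y z :: 'm and f :: "('k \<Rightarrow> 'm) \<Rightarrow> ('k \<Rightarrow> 'm)"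
  assumes y: "y \<noteq> z"
    and cm: "continuous_map (kappa_mu_top r) (subtopology (kappa_mu_top r) (fin_zero_set z)) f"
    and fx: "\<forall>x \<in> fin_zero_set z. f x = x"
  shows False
proof -
  define X :: "'k set \<Rightarrow> 'k \<Rightarrow> 'm" where "X S = (\<lambda>b. if b \<in> S then z else y)" for S
  have zs: "{a. X S a = z} = S" for S using y unfolding X_def by auto
  have XA: "finite S \<Longrightarrow> X S \<in> fin_zero_set z" for S unfolding fin_zero_set_def using zs[of S] by simp
  have step: "\<exists>d. c \<in> underS r d \<and> (\<forall>w. (\<forall>b\<in>underS r d. w b = X S b) \<longrightarrow> f w c = z)"
    if fS: "finite S" and cS: "c \<in> S" for c S
  proof -
    obtain e where e: "c \<in> underS r e" using nomax by blast
    define N where "N = {w. \<forall>b\<in>underS r e. w b = X S b}"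
    have "openin (subtopology (kappa_mu_top r) (fin_zero_set z)) (N \<inter> fin_zero_set z)"
      unfolding openin_subtopology N_def using basic_open by blast
    then have op: "openin (kappa_mu_top r) {x \<in> topspace (kappa_mu_top r). f x \<in> N \<inter> fin_zero_set z}"
      by (rule openin_continuous_map_preimage[OF cm])
    have "X S \<in> {x \<in> topspace (kappa_mu_top r). f x \<in> N \<inter> fin_zero_set z}"
      using fx XA[OF fS] unfolding topsp N_def by auto
    then obtain a where a: "{w. \<forall>b\<in>underS r a. w b = X S b} \<subseteq> {x \<in> topspace (kappa_mu_top r). f x \<in> N \<inter> fin_zero_set z}"
      using open_base[OF op] by blast
    define m where "m = (if (a,c) \<in> r then c else a)"
    have am: "(a,m) \<in> r" and cm': "(c,m) \<in> r" using tot[of a c] rfl unfolding m_def by auto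
    obtain d where d: "m \<in> underS r d" using nomax by blast
    have md: "(m,d) \<in> r" using d unfolding underS_def by auto
    have cd: "c \<in> underS r d"
    proof (cases "c = m")
      case True then show ?thesis using d by simp
    next
      case False then have "c \<in> underS r m" using cm' unfolding underS_def by auto
      then show ?thesis using lt_trans d by blast
    qed
    have ad: "underS r a \<subseteq> underS r d" using underS_mono[OF am] underS_mono[OF md] by blast
    show ?thesis
    proof (intro exI[of _ d] conjI cd allI impI)
      fix w assume "\<forall>b\<in>underS r d. w b = X S b"
      then have "w \<in> {w. \<forall>b\<in>underS r a. w b = X S b}" using ad by blast
      then have "f w \<in> N" using a by blast
      then have "f w c = X S c" using e unfolding N_def by blast
      then show "f w c = z" using cS unfolding X_def by simp
    qed
  qed
  define g where "g c S = (SOME d. c \<in> underS r d \<and> (\<forall>w. (\<forall>b\<in>underS r d. w b = X S b) \<longrightarrow> f w c = z))" for c S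
  have g: "c \<in> underS r (g c S) \<and> (\<forall>w. (\<forall>b\<in>underS r (g c S). w b = X S b) \<longrightarrow> f w c = z)"
    if "finite S" "c \<in> S" for c S
    unfolding g_def by (rule someI_ex[OF step[OF that]])
  define \<alpha> where "\<alpha> = alph g undefined"
  have gn: "\<alpha> n \<in> underS r (\<alpha> (Suc n)) \<and> (\<forall>w. (\<forall>b\<in>underS r (\<alpha> (Suc n)). w b = X (\<alpha> ` {..n}) b) \<longrightarrow> f w (\<alpha> n) = z)" for n
    unfolding \<alpha>_def alph.simps by (rule g) auto
  have mono: "\<alpha> m \<in> underS r (\<alpha> n)" if "m < n" for m n
    using that
  proof (induction n)
    case 0 then show ?case by simp
  next
    case (Suc n)
    show ?case
    proof (cases "m = n")
      case True then show ?thesis using gn by simp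
    next
      case False then show ?thesis using Suc gn lt_trans by (metis less_SucE)
    qed
  qed
  have irr: "a \<notin> underS r a" for a unfolding underS_def by simp
  have inj: "inj \<alpha>"
  proof (rule injI)
    fix m n assume "\<alpha> m = \<alpha> n"
    then show "m = n" using mono[of m n] mono[of n m] irr by (metis linorder_neqE_nat)
  qed
  define xw where "xw = X (range \<alpha>)"
  have agree: "\<forall>b\<in>underS r (\<alpha> (Suc n)). xw b = X (\<alpha> ` {..n}) b" for n
  proof
    fix b assume b: "b \<in> underS r (\<alpha> (Suc n))"
    have "b \<in> range \<alpha> \<longleftrightarrow> b \<in> \<alpha> ` {..n}"
    proof
      assume "b \<in> range \<alpha>"
      then obtain k where k: "b = \<alpha> k" by blast
      show "b \<in> \<alpha> ` {..n}"
      proof (cases "k \<le> n")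
        case True then show ?thesis using k by blast
      next
        case False
        then have "k = Suc n \<or> Suc n < k" by auto
        then show ?thesis using b k mono[of "Suc n" k] irr lt_trans by metis
      qed
    qed auto
    then show "xw b = X (\<alpha> ` {..n}) b" unfolding xw_def X_def by simp
  qed
  have fz: "f xw (\<alpha> n) = z" for n using gn[of n] agree[of n] by blast
  have "f xw \<in> topspace (subtopology (kappa_mu_top r) (fin_zero_set z))"
    using cm unfolding continuous_map_def topsp by blast
  then have "f xw \<in> fin_zero_set z" by simp
  then have "finite {a. f xw a = z}" unfolding fin_zero_set_def by simp
  moreover have "range \<alpha> \<subseteq> {a. f xw a = z}" using fz by auto
  moreover have "infinite (range \<alpha>)" using inj by (simp add: finite_image_iff)
  ultimately show False using finite_subset by blast
qed

end

theorem proposition1p4: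
  fixes r :: "'k rel" and z :: 'm
  assumes "card_order r"
    and "regularCard r"
    and "\<not> countable (UNIV :: 'k set)"
    and "\<exists>y :: 'm. y \<noteq> z"
  shows "closedin (kappa_mu_top r) (fin_zero_set z :: ('k \<Rightarrow> 'm) set) \<and>
         \<not> (\<exists>f. continuous_map (kappa_mu_top r) (subtopology (kappa_mu_top r) (fin_zero_set z)) f
               \<and> (\<forall>x \<in> fin_zero_set z. f x = x))"
proof -
  have K: "kmu r" using assms(1,3) by (rule kmu.intro)
  obtain y :: 'm where y: "y \<noteq> z" using assms(4) by blast
  have C: "closedin (kappa_mu_top r) (fin_zero_set z :: ('k \<Rightarrow> 'm) set)"
    by (rule kmu.closed_A[OF K assms(2)])
  have N: "\<not> (\<exists>f. continuous_map (kappa_mu_top r) (subtopology (kappa_mu_top r) (fin_zero_set z)) f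
               \<and> (\<forall>x \<in> fin_zero_set z. f x = x))"
  proof
    assume "\<exists>f. continuous_map (kappa_mu_top r) (subtopology (kappa_mu_top r) (fin_zero_set z)) f
               \<and> (\<forall>x \<in> fin_zero_set z. f x = x)"
    then obtain f where f: "continuous_map (kappa_mu_top r) (subtopology (kappa_mu_top r) (fin_zero_set z)) f"
      "\<forall>x \<in> fin_zero_set z. f x = x" by blast
    show False by (rule kmu.no_ret[OF K y f])
  qed
  show ?thesis using C N by (rule conjI)
qed

end
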